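(* Let $\lambda\in\mathbb R$ and write $u=x^2+x^4$. A smooth covector field $A$ on $\mathbb R^4$ satisfies $L_\xi A=0$ for $\xi\in\{e_{12}-e_{14}+\lambda e_2,\,e_1,\,e_3,\,e_2-e_4\}$ if and only if: (i) when $\lambda\neq0$, there are real constants $C_1,\dots,C_4$ with $$A_1=\frac{C_2}{\lambda}u+C_3,\quad A_2=\frac{C_2}{2\lambda^2}u^2+\frac{C_3}{\lambda}u+C_4,\quad A_3=C_1,\quad A_4=A_2+C_2;$$ (ii) when $\lambda=0$, $A_1=0$, $A_2=A_4=\Phi(u)$, $A_3=\Psi(u)$ for some smooth functions $\Phi,\Psi$ of one variable.
   Context: Work in $\mathbb R^4$ with Galilean (Cartesian) coordinates $x^1,x^2,x^3,x^4$ of Minkowski space (metric $\mathrm{diag}(-1,-1,-1,1)$). A potential on an open set $U\subseteq\mathbb R^4$ is a smooth covector field $A=A_i\,dx^i$; its components $A_i$ are always those with respect to the coordinates $x^i$, even when written as functions of other variables. For a vector field $\xi=\xi^k\partial_k$ the Lie derivative is $(L_\xi A)_i=\xi^k\partial_kA_i+A_k\partial_i\xi^k$. The vector fields used are, by components $(\xi^1,\xi^2,\xi^3,\xi^4)$: $e_1=(1,0,0,0)$, $e_2=(0,1,0,0)$, $e_3=(0,0,1,0)$, $e_4=(0,0,0,1)$, $e_{12}=(-x^2,x^1,0,0)$, $e_{13}=(x^3,0,-x^1,0)$, $e_{23}=(0,-x^3,x^2,0)$, $e_{14}=(x^4,0,0,x^1)$, $e_{24}=(0,x^4,0,x^2)$,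 $e_{34}=(0,0,x^4,x^3)$. A potential admits a family of vector fields if $L_\xi A=0$ for each $\xi$ in it (equivalently for every element of their linear span). "Functions" are smooth real functions; $\mathrm{ch}=\cosh$, $\mathrm{sh}=\sinh$. *)

theory Defs
  imports "HOL-Analysis.Analysis"
begin

type_synonym pt = "real \<times> real \<times> real \<times> real"

fun bvec :: "nat \<Rightarrow> pt" where
  "bvec (Suc 0) = (1,0,0,0)"
| "bvec (Suc (Suc 0)) = (0,1,0,0)"
| "bvec (Suc (Suc (Suc 0))) = (0,0,1,0)"
| "bvec (Suc (Suc (Suc (Suc 0)))) = (0,0,0,1)"
| "bvec _ = 0"

definition pd :: "nat \<Rightarrow> (pt \<Rightarrow> real) \<Rightarrow> pt \<Rightarrow> real" where
  "pd i f x = deriv (\<lambda>t. f (x + t *\<^sub>R bvec i)) 0"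

coinductive smooth4 :: "(pt \<Rightarrow> real) \<Rightarrow> bool" where
  "(\<And>x. f differentiable (at x)) \<Longrightarrow> (\<And>i. i \<in> {1..4} \<Longrightarrow> smooth4 (pd i f)) \<Longrightarrow> smooth4 f"

coinductive smooth1 :: "(real \<Rightarrow> real) \<Rightarrow> bool" where
  "(\<And>x. f differentiable (at x)) \<Longrightarrow> smooth1 (deriv f) \<Longrightarrow> smooth1 f"

text \<open>Covector fields and vector fields: component index (1..4) and point.\<close>
type_synonym field = "nat \<Rightarrow> pt \<Rightarrow> real"

definition smooth_field :: "field \<Rightarrow> bool" where
  "smooth_field A \<longleftrightarrow> (\<forall>i\<in>{1..4}. smooth4 (A i))"

definition lie :: "field \<Rightarrow> field \<Rightarrow> field" where
  "lie xi A i x = (\<Sum>k\<in>{1..4}. xi k x * pd k (A i) x) + (\<Sum>k\<in>{1..4}. A k x * pd i (xi k) x)"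

definition admits :: "field \<Rightarrow> field \<Rightarrow> bool" where
  "admits A xi \<longleftrightarrow> (\<forall>i\<in>{1..4}. \<forall>x. lie xi A i x = 0)"

definition vf :: "(pt \<Rightarrow> real) list \<Rightarrow> field" where
  "vf cs k x = (if k \<in> {1..4} then (cs ! (k - 1)) x else 0)"

definition e1 :: field where "e1 = vf [\<lambda>_. 1, \<lambda>_. 0, \<lambda>_. 0, \<lambda>_. 0]"
definition e2 :: field where "e2 = vf [\<lambda>_. 0, \<lambda>_. 1, \<lambda>_. 0, \<lambda>_. 0]"
definition e3 :: field where "e3 = vf [\<lambda>_. 0, \<lambda>_. 0, \<lambda>_. 1, \<lambda>_. 0]"
definition e4 :: field where "e4 = vf [\<lambda>_. 0, \<lambda>_. 0, \<lambda>_. 0, \<lambda>_. 1]"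
definition e12 :: field where
  "e12 = vf [\<lambda>(x1,x2,x3,x4). - x2, \<lambda>(x1,x2,x3,x4). x1, \<lambda>_. 0, \<lambda>_. 0]"
definition e14 :: field where
  "e14 = vf [\<lambda>(x1,x2,x3,x4). x4, \<lambda>_. 0, \<lambda>_. 0, \<lambda>(x1,x2,x3,x4). x1]"

definition vadd :: "field \<Rightarrow> field \<Rightarrow> field" where "vadd a b k x = a k x + b k x"
definition vscale :: "real \<Rightarrow> field \<Rightarrow> field" where "vscale c a k x = c * a k x"

end

theory Submission
  imports Defs
begin


lemma sum4: "(\<Sum>k\<in>{Suc 0..4}. g k) = g 1 + g 2 + g 3 + g 4"
proof -
  have "{Suc 0..4} = {1,2,3,4}" by auto
  then show ?thesis by (simp add: add.assoc)
qed

lemma pd1: "pd (Suc 0) f (x1,x2,x3,x4) = deriv (\<lambda>t. f (x1+t,x2,x3,x4)) 0"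
  by (simp add: pd_def)
lemma pd2: "pd 2 f (x1,x2,x3,x4) = deriv (\<lambda>t. f (x1,x2+t,x3,x4)) 0"
  by (simp add: pd_def numeral_eq_Suc)
lemma pd3: "pd 3 f (x1,x2,x3,x4) = deriv (\<lambda>t. f (x1,x2,x3+t,x4)) 0"
  by (simp add: pd_def numeral_eq_Suc)
lemma pd4: "pd 4 f (x1,x2,x3,x4) = deriv (\<lambda>t. f (x1,x2,x3,x4+t)) 0"
  by (simp add: pd_def numeral_eq_Suc)

lemma deriv_lin0: "deriv (\<lambda>t. a + t * b) 0 = (b::real)"
  by (rule DERIV_imp_deriv) (auto intro!: derivative_eq_intros)
lemma deriv_id0: "deriv (\<lambda>t. a + t) 0 = (1::real)"
  by (rule DERIV_imp_deriv) (auto intro!: derivative_eq_intros)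
lemma deriv_mid0: "deriv (\<lambda>t. - a - t) 0 = (-1::real)"
  by (rule DERIV_imp_deriv) (auto intro!: derivative_eq_intros)
lemma deriv_mid0': "deriv (\<lambda>t. - t - a) 0 = (-1::real)"
  by (rule DERIV_imp_deriv) (auto intro!: derivative_eq_intros)

definition "xi lam = vadd (vadd e12 (vscale (-1) e14)) (vscale lam e2)"

lemma vf_simps: "vf [a,b,c,d] (Suc 0) = a" "vf [a,b,c,d] 2 = b" "vf [a,b,c,d] 3 = c" "vf [a,b,c,d] 4 = d"
  by (auto simp: vf_def fun_eq_iff numeral_eq_Suc)

lemma xi_simps: "xi lam (Suc 0) (x1,x2,x3,x4) = -x2-x4" "xi lam 2 (x1,x2,x3,x4) = x1 + lam"
   "xi lam 3 (x1,x2,x3,x4) = 0" "xi lam 4 (x1,x2,x3,x4) = -x1"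
  by (simp_all add: xi_def vadd_def vscale_def e12_def e14_def e2_def vf_simps)

lemma pdxi: 
  "pd (Suc 0) (xi lam (Suc 0)) (x1,x2,x3,x4) = 0" "pd 2 (xi lam (Suc 0)) (x1,x2,x3,x4) = -1"
  "pd 3 (xi lam (Suc 0)) (x1,x2,x3,x4) = 0" "pd 4 (xi lam (Suc 0)) (x1,x2,x3,x4) = -1"
  "pd (Suc 0) (xi lam 2) (x1,x2,x3,x4) = 1" "pd 2 (xi lam 2) (x1,x2,x3,x4) = 0"
  "pd 3 (xi lam 2) (x1,x2,x3,x4) = 0" "pd 4 (xi lam 2) (x1,x2,x3,x4) = 0"
  "pd (Suc 0) (xi lam 3) (x1,x2,x3,x4) = 0" "pd 2 (xi lam 3) (x1,x2,x3,x4) = 0"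
  "pd 3 (xi lam 3) (x1,x2,x3,x4) = 0" "pd 4 (xi lam 3) (x1,x2,x3,x4) = 0"
  "pd (Suc 0) (xi lam 4) (x1,x2,x3,x4) = -1" "pd 2 (xi lam 4) (x1,x2,x3,x4) = 0"
  "pd 3 (xi lam 4) (x1,x2,x3,x4) = 0" "pd 4 (xi lam 4) (x1,x2,x3,x4) = 0"
  by (simp_all add: pd1 pd2 pd3 pd4 xi_simps deriv_mid0 deriv_mid0' flip: add.assoc)

lemma ball4: "(\<forall>i\<in>{1..4::nat}. P i) \<longleftrightarrow> P (Suc 0) \<and> P 2 \<and> P 3 \<and> P 4"
proof -
  have "{1..4::nat} = {1,2,3,4}" by auto
  then show ?thesis by simp
qed

lemma all_pt: "(\<forall>x::pt. P x) \<longleftrightarrow> (\<forall>a b c d. P (a,b,c,d))"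
  by auto

lemma pd_const: "pd k (\<lambda>_. c) x = 0"
  by (simp add: pd_def)

lemma vadd_eta: "vadd a b k = (\<lambda>x. a k x + b k x)" by (simp add: vadd_def fun_eq_iff)
lemma vscale_eta: "vscale c a k = (\<lambda>x. c * a k x)" by (simp add: vscale_def fun_eq_iff)

lemma lie_xi: "lie (xi lam) A i (x1,x2,x3,x4) = (-x2-x4) * pd 1 (A i) (x1,x2,x3,x4)
   + (x1+lam) * pd 2 (A i) (x1,x2,x3,x4) + (-x1) * pd 4 (A i) (x1,x2,x3,x4)
   + (A (Suc 0) (x1,x2,x3,x4) * pd i (xi lam (Suc 0)) (x1,x2,x3,x4)
      + A 2 (x1,x2,x3,x4) * pd i (xi lam 2) (x1,x2,x3,x4)
      + A 4 (x1,x2,x3,x4) * pd i (xi lam 4) (x1,x2,x3,x4))"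
proof -
  have "xi lam 3 = (\<lambda>_. 0)"
    by (simp add: fun_eq_iff xi_def vadd_def vscale_def e12_def e14_def e2_def vf_simps)
  then show ?thesis
    by (simp add: lie_def sum4 xi_simps pd_const)
qed

lemma lie_e1: "lie e1 A i x = pd 1 (A i) x"
  by (simp add: lie_def sum4 e1_def vf_simps pd_const)
lemma lie_e3: "lie e3 A i x = pd 3 (A i) x"
  by (simp add: lie_def sum4 e3_def vf_simps pd_const)
lemma lie_e24: "lie (vadd e2 (vscale (-1) e4)) A i x = pd 2 (A i) x - pd 4 (A i) x"
  by (simp add: lie_def sum4 e2_def e4_def vadd_eta vscale_eta vf_simps pd_const)

lemma L1:
  fixes f :: "'a::real_normed_vector \<Rightarrow> real"
  assumes "f differentiable (at (x + t *\<^sub>R v))"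
  shows "((\<lambda>s. f (x + s *\<^sub>R v)) has_real_derivative frechet_derivative f (at (x + t *\<^sub>R v)) v) (at t)"
proof -
  let ?D = "frechet_derivative f (at (x + t *\<^sub>R v))"
  have h1: "((\<lambda>s. x + s *\<^sub>R v) has_derivative (\<lambda>h. h *\<^sub>R v)) (at t)"
    by (auto intro!: derivative_eq_intros)
  have h2: "(f has_derivative ?D) (at (x + t *\<^sub>R v))"
    using assms frechet_derivative_works by blast
  have lin: "linear ?D" using h2 has_derivative_linear by blast
  have "((f \<circ> (\<lambda>s. x + s *\<^sub>R v)) has_derivative (?D \<circ> (\<lambda>h. h *\<^sub>R v))) (at t)"
    by (rule diff_chain_at[OF h1 h2])
  moreover have "(?D \<circ> (\<lambda>h. h *\<^sub>R v)) = (*) (?D v)"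
    using lin by (simp add: fun_eq_iff linear_scale)
  ultimately show ?thesis
    by (simp add: has_field_derivative_def o_def)
qed

lemma pd_frechet:
  assumes "f differentiable (at x)"
  shows "pd k f x = frechet_derivative f (at x) (bvec k)"
  unfolding pd_def
  by (rule DERIV_imp_deriv) (use L1[of f x 0 "bvec k"] assms in simp)

lemma const_dir:
  fixes f :: "'a::real_normed_vector \<Rightarrow> real"
  assumes "\<forall>y. f differentiable (at y)" "\<forall>y. frechet_derivative f (at y) v = 0"
  shows "f (p + t *\<^sub>R v) = f p"
proof -
  have "\<forall>s. ((\<lambda>s. f (p + s *\<^sub>R v)) has_real_derivative 0) (at s)"
    using L1[of f p] assms by metis
  from DERIV_isconst_all[OF this, of t 0] show ?thesis by simp
qed

lemma reduce_u:
  assumes d: "\<forall>y. f differentiable (at y)"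
    and p1: "\<forall>a b c d. pd 1 f (a,b,c,d) = 0" and p3: "\<forall>a b c d. pd 3 f (a,b,c,d) = 0"
    and p24: "\<forall>a b c d. pd 2 f (a,b,c,d) = pd 4 f (a,b,c,d)"
  shows "f (x1,x2,x3,x4) = f (0,x2+x4,0,0)"
proof -
  have f1: "\<forall>y. frechet_derivative f (at y) (bvec 1) = 0"
    using p1 pd_frechet d by (metis prod_cases4)
  have f3: "\<forall>y. frechet_derivative f (at y) (bvec 3) = 0"
    using p3 pd_frechet d by (metis prod_cases4)
  have f24: "\<forall>y. frechet_derivative f (at y) (bvec 2 - bvec 4) = 0"
  proof
    fix y
    have "linear (frechet_derivative f (at y))"
      using d frechet_derivative_works has_derivative_linear by blast
    then have "frechet_derivative f (at y) (bvec 2 - bvec 4) = frechet_derivative f (at y) (bvec 2) - frechet_derivative f (at y) (bvec 4)"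
      by (simp add: linear_diff)
    also have "\<dots> = 0" using p24 pd_frechet d by (metis prod_cases4 diff_self)
    finally show "frechet_derivative f (at y) (bvec 2 - bvec 4) = 0" .
  qed
  have "f (x1,x2,x3,x4) = f ((x1,x2,x3,x4) + (-x1) *\<^sub>R bvec 1)"
    using const_dir[OF d f1] by metis
  also have "\<dots> = f (0,x2,x3,x4)" by simp
  also have "\<dots> = f ((0,x2,x3,x4) + (-x3) *\<^sub>R bvec 3)"
    using const_dir[OF d f3] by metis
  also have "\<dots> = f (0,x2,0,x4)" by (simp add: numeral_eq_Suc)
  also have "\<dots> = f ((0,x2,0,x4) + x4 *\<^sub>R (bvec 2 - bvec 4))"
    using const_dir[OF d f24] by metis
  also have "\<dots> = f (0,x2+x4,0,0)" by (simp add: numeral_eq_Suc)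
  finally show ?thesis .
qed

lemma F_deriv:
  assumes "\<forall>y. f differentiable (at y)"
  shows "((\<lambda>s. f (0,s,0,0)) has_real_derivative pd 2 f (0,s,0,0)) (at s)"
proof -
  have "((\<lambda>s. f (0 + s *\<^sub>R bvec 2)) has_real_derivative frechet_derivative f (at (0 + s *\<^sub>R bvec 2)) (bvec 2)) (at s)"
    using L1 assms by blast
  moreover have "(0::pt) + s *\<^sub>R bvec 2 = (0,s,0,0)" by (simp add: numeral_eq_Suc)
  ultimately show ?thesis using pd_frechet assms by (simp add: numeral_eq_Suc)
qed

lemma smooth4_diff: "smooth4 f \<Longrightarrow> f differentiable (at x)"
  by (erule smooth4.cases) auto
lemma smooth4_pd: "smooth4 f \<Longrightarrow> i \<in> {1..4} \<Longrightarrow> smooth4 (pd i f)"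
  by (erule smooth4.cases) auto

lemma smooth_restr: "smooth4 f \<Longrightarrow> smooth1 (\<lambda>s. f (0,s,0,0))"
proof (coinduction arbitrary: f)
  case smooth1
  have d: "\<forall>y. f differentiable (at y)" using smooth1 smooth4_diff by blast
  have "deriv (\<lambda>s. f (0,s,0,0)) = (\<lambda>s. pd 2 f (0,s,0,0))"
    using F_deriv[OF d] DERIV_imp_deriv by blast
  moreover have "smooth4 (pd 2 f)" using smooth4_pd smooth1 by auto
  moreover have "\<forall>x. (\<lambda>s. f (0,s,0,0)) differentiable (at x)"
    using F_deriv[OF d] real_differentiable_def by blast
  ultimately show ?case by blast
qed

lemma pd_u:
  assumes "\<forall>x1 x2 x3 x4. f (x1,x2,x3,x4) = F (x2+x4)" "\<forall>s. (F has_real_derivative F' s) (at s)"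
  shows "pd (Suc 0) f (x1,x2,x3,x4) = 0" "pd 2 f (x1,x2,x3,x4) = F' (x2+x4)"
    "pd 3 f (x1,x2,x3,x4) = 0" "pd 4 f (x1,x2,x3,x4) = F' (x2+x4)"
proof -
  show "pd (Suc 0) f (x1,x2,x3,x4) = 0" "pd 3 f (x1,x2,x3,x4) = 0"
    using assms(1) by (simp_all add: pd1 pd3)
  have d: "(F has_real_derivative F'(x2+x4)) (at (x2+x4+0))" using assms(2) by simp
  have "((\<lambda>t. F (x2 + x4 + t)) has_real_derivative F' (x2+x4) * 1) (at 0)"
    by (rule DERIV_chain2[of F _ "\<lambda>t. x2 + x4 + t", OF d]) (auto intro!: derivative_eq_intros)
  then have "deriv (\<lambda>t. F (x2 + x4 + t)) 0 = F' (x2+x4)" using DERIV_imp_deriv by fastforce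
  then show "pd 2 f (x1,x2,x3,x4) = F' (x2+x4)" "pd 4 f (x1,x2,x3,x4) = F' (x2+x4)"
    using assms(1) by (simp_all add: pd2 pd4 algebra_simps)
qed

lemma const_fun:
  assumes "\<forall>s. (f has_real_derivative 0) (at s)"
  shows "f s = f 0"
  using DERIV_isconst_all[OF assms] by blast

lemma solve_nonzero:
  assumes lam: "lam \<noteq> 0"
    and d1: "\<forall>s. (F1 has_real_derivative G1 s) (at s)"
    and d2: "\<forall>s. (F2 has_real_derivative G2 s) (at s)"
    and d3: "\<forall>s. (F3 has_real_derivative G3 s) (at s)"
    and d4: "\<forall>s. (F4 has_real_derivative G4 s) (at s)"
    and o1: "\<forall>s. lam * G1 s + F2 s - F4 s = 0"
    and o2: "\<forall>s. lam * G2 s - F1 s = 0"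
    and o3: "\<forall>s. lam * G3 s = 0"
    and o4: "\<forall>s. lam * G4 s - F1 s = 0"
  shows "\<exists>C1 C2 C3 C4. \<forall>s. F1 s = C2/lam* s + C3 \<and> F2 s = C2/(2*lam\<^sup>2)* s\<^sup>2 + C3/lam* s + C4
           \<and> F3 s = C1 \<and> F4 s = F2 s + C2"
proof -
  define C1 where "C1 = F3 0"
  define C2 where "C2 = F4 0 - F2 0"
  define C3 where "C3 = F1 0"
  define C4 where "C4 = F2 0"
  have e3: "F3 s = C1" for s
  proof -
    have "\<forall>s. (F3 has_real_derivative 0) (at s)" using d3 o3 lam by simp
    then show ?thesis unfolding C1_def by (rule const_fun)
  qed
  have e4: "F4 s = F2 s + C2" for s
  proof -
    have "\<forall>s. ((\<lambda>s. F4 s - F2 s) has_real_derivative G4 s - G2 s) (at s)"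
      using d2 d4 by (auto intro!: derivative_eq_intros)
    moreover have "G4 s - G2 s = 0" for s using o2 o4 lam
      by (metis diff_eq_diff_eq eq_iff_diff_eq_0 mult_cancel_left)
    ultimately have "\<forall>s. ((\<lambda>s. F4 s - F2 s) has_real_derivative 0) (at s)" by simp
    from const_fun[OF this, of s] show ?thesis unfolding C2_def by simp
  qed
  have e1: "F1 s = C2/lam* s + C3" for s
  proof -
    have "\<forall>s. ((\<lambda>s. F1 s - C2/lam* s) has_real_derivative G1 s - C2/lam) (at s)"
      using d1 lam by (auto intro!: derivative_eq_intros)
    moreover have "G1 s - C2/lam = 0" for s
    proof -
      have "lam * G1 s = C2" using o1 e4[of s] by (metis add_diff_cancel_left' diff_add_cancel diff_diff_eq2 eq_iff_diff_eq_0)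
      then show ?thesis using lam by (simp add: field_simps)
    qed
    ultimately have "\<forall>s. ((\<lambda>s. F1 s - C2/lam* s) has_real_derivative 0) (at s)" by simp
    from const_fun[OF this, of s] show ?thesis unfolding C3_def by simp
  qed
  have e2: "F2 s = C2/(2*lam\<^sup>2)* s\<^sup>2 + C3/lam* s + C4" for s
  proof -
    have "\<forall>s. ((\<lambda>s. F2 s - (C2/(2*lam\<^sup>2)* s\<^sup>2 + C3/lam* s)) has_real_derivative
         G2 s - (C2/(2*lam\<^sup>2)*(2* s) + C3/lam)) (at s)"
      using d2 lam by (auto intro!: derivative_eq_intros simp: field_simps power2_eq_square)
    moreover have "G2 s - (C2/(2*lam\<^sup>2)*(2* s) + C3/lam) = 0" for s
    proof -
      have "lam * G2 s = C2/lam* s + C3" using o2 e1[of s] by simp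
      then show ?thesis using lam by (simp add: field_simps power2_eq_square)
    qed
    ultimately have "\<forall>s. ((\<lambda>s. F2 s - (C2/(2*lam\<^sup>2)* s\<^sup>2 + C3/lam* s)) has_real_derivative 0) (at s)" by simp
    from const_fun[OF this, of s] show ?thesis unfolding C4_def by simp
  qed
  show ?thesis using e1 e2 e3 e4 by blast
qed

lemma backward:
  assumes A: "\<forall>x1 x2 x3 x4. A (Suc 0) (x1,x2,x3,x4) = F1 (x2+x4) \<and> A 2 (x1,x2,x3,x4) = F2 (x2+x4)
       \<and> A 3 (x1,x2,x3,x4) = F3 (x2+x4) \<and> A 4 (x1,x2,x3,x4) = F4 (x2+x4)"
    and d1: "\<forall>s. (F1 has_real_derivative G1 s) (at s)"
    and d2: "\<forall>s. (F2 has_real_derivative G2 s) (at s)"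
    and d3: "\<forall>s. (F3 has_real_derivative G3 s) (at s)"
    and d4: "\<forall>s. (F4 has_real_derivative G4 s) (at s)"
    and o1: "\<forall>s. lam * G1 s + F2 s - F4 s = 0"
    and o2: "\<forall>s. lam * G2 s - F1 s = 0"
    and o3: "\<forall>s. lam * G3 s = 0"
    and o4: "\<forall>s. lam * G4 s - F1 s = 0"
  shows "admits A (xi lam) \<and> admits A e1 \<and> admits A e3 \<and> admits A (vadd e2 (vscale (-1) e4))"
proof -
  note P1 = pd_u[of "A (Suc 0)" F1 G1, OF _ d1]
  note P2 = pd_u[of "A 2" F2 G2, OF _ d2]
  note P3 = pd_u[of "A 3" F3 G3, OF _ d3]
  note P4 = pd_u[of "A 4" F4 G4, OF _ d4]
  have Q: "\<forall>x1 x2 x3 x4. A (Suc 0) (x1,x2,x3,x4) = F1 (x2+x4)" "\<forall>x1 x2 x3 x4. A 2 (x1,x2,x3,x4) = F2 (x2+x4)"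
    "\<forall>x1 x2 x3 x4. A 3 (x1,x2,x3,x4) = F3 (x2+x4)" "\<forall>x1 x2 x3 x4. A 4 (x1,x2,x3,x4) = F4 (x2+x4)"
    using A by auto
  note R = P1[OF Q(1)] P2[OF Q(2)] P3[OF Q(3)] P4[OF Q(4)]
  show ?thesis
    unfolding admits_def ball4 all_pt
    using o1 o2 o3 o4 Q
    by (auto simp add: lie_xi lie_e1 lie_e3 lie_e24 pdxi R algebra_simps)
qed



lemma fw_red:
  assumes sm: "smooth_field A" and a2: "admits A e1" and a3: "admits A e3"
    and a4: "admits A (vadd e2 (vscale (-1) e4))" and i: "i \<in> {1..4}"
  shows "A i (x1,x2,x3,x4) = A i (0,x2+x4,0,0)" "\<forall>y. A i differentiable (at y)"
proof -
  show d: "\<forall>y. A i differentiable (at y)"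
    using sm i smooth4_diff unfolding smooth_field_def by blast
  show "A i (x1,x2,x3,x4) = A i (0,x2+x4,0,0)"
  proof (rule reduce_u[OF d])
    show "\<forall>a b c d. pd 1 (A i) (a,b,c,d) = 0" using a2 i unfolding admits_def lie_e1 by blast
    show "\<forall>a b c d. pd 3 (A i) (a,b,c,d) = 0" using a3 i unfolding admits_def lie_e3 by blast
    show "\<forall>a b c d. pd 2 (A i) (a,b,c,d) = pd 4 (A i) (a,b,c,d)" using a4 i unfolding admits_def lie_e24 by auto
  qed
qed

lemma fw_ode:
  assumes a1: "admits A (xi lam)" and a2: "admits A e1"
  shows "lam * pd 2 (A (Suc 0)) (0,s,0,0) + A 2 (0,s,0,0) - A 4 (0,s,0,0) = 0"
    "lam * pd 2 (A 2) (0,s,0,0) - A (Suc 0) (0,s,0,0) = 0"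
    "lam * pd 2 (A 3) (0,s,0,0) = 0"
    "lam * pd 2 (A 4) (0,s,0,0) - A (Suc 0) (0,s,0,0) = 0"
proof -
  have z: "pd (Suc 0) (A i) (0,s,0,0) = 0" if "i \<in> {1..4}" for i
    using a2 that unfolding admits_def lie_e1 by auto
  have l: "lie (xi lam) A i (0,s,0,0) = 0" if "i \<in> {1..4}" for i
    using a1 that unfolding admits_def by auto
  show "lam * pd 2 (A (Suc 0)) (0,s,0,0) + A 2 (0,s,0,0) - A 4 (0,s,0,0) = 0"
    using l[of "Suc 0"] z[of "Suc 0"] by (simp add: lie_xi pdxi)
  show "lam * pd 2 (A 2) (0,s,0,0) - A (Suc 0) (0,s,0,0) = 0"
    using l[of 2] z[of 2] by (simp add: lie_xi pdxi)
  show "lam * pd 2 (A 3) (0,s,0,0) = 0"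
    using l[of 3] z[of 3] by (simp add: lie_xi pdxi)
  show "lam * pd 2 (A 4) (0,s,0,0) - A (Suc 0) (0,s,0,0) = 0"
    using l[of 4] z[of 4] by (simp add: lie_xi pdxi)
qed

theorem mainTheorem14:
  fixes A :: field and lam :: real
  assumes "smooth_field A"
  shows "(admits A (vadd (vadd e12 (vscale (-1) e14)) (vscale lam e2)) \<and> admits A e1
          \<and> admits A e3 \<and> admits A (vadd e2 (vscale (-1) e4)))
    \<longleftrightarrow>
    (if lam \<noteq> 0 then
       (\<exists>C1 C2 C3 C4 :: real. \<forall>x1 x2 x3 x4. let u = x2 + x4 in
          A 1 (x1,x2,x3,x4) = C2 / lam * u + C3 \<and>
          A 2 (x1,x2,x3,x4) = C2 / (2 * lam\<^sup>2) * u\<^sup>2 + C3 / lam * u + C4 \<and>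
          A 3 (x1,x2,x3,x4) = C1 \<and>
          A 4 (x1,x2,x3,x4) = A 2 (x1,x2,x3,x4) + C2)
     else
       (\<exists>\<Phi> \<Psi> :: real \<Rightarrow> real. smooth1 \<Phi> \<and> smooth1 \<Psi> \<and> (\<forall>x1 x2 x3 x4. let u = x2 + x4 in
          A 1 (x1,x2,x3,x4) = 0 \<and>
          A 2 (x1,x2,x3,x4) = \<Phi> u \<and> A 4 (x1,x2,x3,x4) = \<Phi> u \<and>
          A 3 (x1,x2,x3,x4) = \<Psi> u)))"
proof -
  have xe: "vadd (vadd e12 (vscale (-1) e14)) (vscale lam e2) = xi lam" by (simp add: xi_def)
  show ?thesis unfolding xe
  proof
    assume H: "admits A (xi lam) \<and> admits A e1 \<and> admits A e3 \<and> admits A (vadd e2 (vscale (-1) e4))"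
    have red: "A i (x1,x2,x3,x4) = A i (0,x2+x4,0,0)" if "i \<in> {1..4}" for i x1 x2 x3 x4
      using fw_red(1)[OF assms _ _ _ that] H by blast
    have der: "((\<lambda>s. A i (0,s,0,0)) has_real_derivative pd 2 (A i) (0,s,0,0)) (at s)"
      if "i \<in> {1..4}" for i s
      using F_deriv fw_red(2)[OF assms _ _ _ that] H by blast
    have H1: "admits A (xi lam)" "admits A e1" using H by auto
    note o = fw_ode[OF H1]
    have r1: "\<And>x1 x2 x3 x4. A (Suc 0) (x1,x2,x3,x4) = A (Suc 0) (0,x2+x4,0,0)" using red[of "Suc 0"] by simp
    have r2: "\<And>x1 x2 x3 x4. A 2 (x1,x2,x3,x4) = A 2 (0,x2+x4,0,0)" using red[of 2] by simp
    have r3: "\<And>x1 x2 x3 x4. A 3 (x1,x2,x3,x4) = A 3 (0,x2+x4,0,0)" using red[of 3] by simp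
    have r4: "\<And>x1 x2 x3 x4. A 4 (x1,x2,x3,x4) = A 4 (0,x2+x4,0,0)" using red[of 4] by simp
    show "if lam \<noteq> 0 then
       (\<exists>C1 C2 C3 C4 :: real. \<forall>x1 x2 x3 x4. let u = x2 + x4 in
          A 1 (x1,x2,x3,x4) = C2 / lam * u + C3 \<and>
          A 2 (x1,x2,x3,x4) = C2 / (2 * lam\<^sup>2) * u\<^sup>2 + C3 / lam * u + C4 \<and>
          A 3 (x1,x2,x3,x4) = C1 \<and>
          A 4 (x1,x2,x3,x4) = A 2 (x1,x2,x3,x4) + C2)
     else
       (\<exists>\<Phi> \<Psi> :: real \<Rightarrow> real. smooth1 \<Phi> \<and> smooth1 \<Psi> \<and> (\<forall>x1 x2 x3 x4. let u = x2 + x4 in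
          A 1 (x1,x2,x3,x4) = 0 \<and>
          A 2 (x1,x2,x3,x4) = \<Phi> u \<and> A 4 (x1,x2,x3,x4) = \<Phi> u \<and>
          A 3 (x1,x2,x3,x4) = \<Psi> u))"
    proof (cases "lam = 0")
      case True
      have f1: "A (Suc 0) (0,s,0,0) = 0" for s using o(2)[of s] True by simp
      have f24: "A 4 (0,s,0,0) = A 2 (0,s,0,0)" for s using o(1)[of s] True by simp
      have s2: "smooth1 (\<lambda>s. A 2 (0,s,0,0))" using assms smooth_restr unfolding smooth_field_def by auto
      have s3: "smooth1 (\<lambda>s. A 3 (0,s,0,0))" using assms smooth_restr unfolding smooth_field_def by auto
      show ?thesis
      proof -
        let ?P = "\<lambda>s. A 2 (0,s,0,0)" and ?Q = "\<lambda>s. A 3 (0,s,0,0)"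
        have "\<forall>x1 x2 x3 x4. A (Suc 0) (x1,x2,x3,x4) = 0 \<and> A 2 (x1,x2,x3,x4) = ?P (x2+x4)
           \<and> A 4 (x1,x2,x3,x4) = ?P (x2+x4) \<and> A 3 (x1,x2,x3,x4) = ?Q (x2+x4)"
          using f1 f24 r1 r2 r3 r4 by metis
        then have G: "smooth1 ?P \<and> smooth1 ?Q \<and> (\<forall>x1 x2 x3 x4. A (Suc 0) (x1,x2,x3,x4) = 0 \<and> A 2 (x1,x2,x3,x4) = ?P (x2+x4)
           \<and> A 4 (x1,x2,x3,x4) = ?P (x2+x4) \<and> A 3 (x1,x2,x3,x4) = ?Q (x2+x4))" using s2 s3 by blast
        have nl: "\<not> lam \<noteq> 0" using True by simp
        show ?thesis unfolding Let_def if_not_P[OF nl] One_nat_def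
          by (rule exI[of _ ?P], rule exI[of _ ?Q], rule G)
      qed
    next
      case False
      have ex: "\<exists>C1 C2 C3 C4. \<forall>s. A (Suc 0) (0,s,0,0) = C2/lam * s + C3 \<and> A 2 (0,s,0,0) = C2/(2*lam\<^sup>2) * s\<^sup>2 + C3/lam * s + C4
           \<and> A 3 (0,s,0,0) = C1 \<and> A 4 (0,s,0,0) = A 2 (0,s,0,0) + C2"
        by (rule solve_nonzero[OF False, of "\<lambda>s. A (Suc 0) (0,s,0,0)" "\<lambda>s. pd 2 (A (Suc 0)) (0,s,0,0)"
          "\<lambda>s. A 2 (0,s,0,0)" "\<lambda>s. pd 2 (A 2) (0,s,0,0)" "\<lambda>s. A 3 (0,s,0,0)" "\<lambda>s. pd 2 (A 3) (0,s,0,0)"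
          "\<lambda>s. A 4 (0,s,0,0)" "\<lambda>s. pd 2 (A 4) (0,s,0,0)"])
           (use der[of "Suc 0"] der[of 2] der[of 3] der[of 4] o in auto)
      then obtain C1 C2 C3 C4 where C: "\<forall>s. A (Suc 0) (0,s,0,0) = C2/lam * s + C3 \<and> A 2 (0,s,0,0) = C2/(2*lam\<^sup>2) * s\<^sup>2 + C3/lam * s + C4
           \<and> A 3 (0,s,0,0) = C1 \<and> A 4 (0,s,0,0) = A 2 (0,s,0,0) + C2" by blast
      show ?thesis
      proof -
        have "\<forall>x1 x2 x3 x4. A (Suc 0) (x1,x2,x3,x4) = C2 / lam * (x2+x4) + C3 \<and>
          A 2 (x1,x2,x3,x4) = C2 / (2 * lam\<^sup>2) * (x2+x4)\<^sup>2 + C3 / lam * (x2+x4) + C4 \<and>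
          A 3 (x1,x2,x3,x4) = C1 \<and>
          A 4 (x1,x2,x3,x4) = A 2 (x1,x2,x3,x4) + C2"
          using C r1 r2 r3 r4 by metis
        then show ?thesis unfolding Let_def if_P[OF False] One_nat_def by blast
      qed
    qed
  next
    assume R: "if lam \<noteq> 0 then
       (\<exists>C1 C2 C3 C4 :: real. \<forall>x1 x2 x3 x4. let u = x2 + x4 in
          A 1 (x1,x2,x3,x4) = C2 / lam * u + C3 \<and>
          A 2 (x1,x2,x3,x4) = C2 / (2 * lam\<^sup>2) * u\<^sup>2 + C3 / lam * u + C4 \<and>
          A 3 (x1,x2,x3,x4) = C1 \<and>
          A 4 (x1,x2,x3,x4) = A 2 (x1,x2,x3,x4) + C2)
     else
       (\<exists>\<Phi> \<Psi> :: real \<Rightarrow> real. smooth1 \<Phi> \<and> smooth1 \<Psi> \<and> (\<forall>x1 x2 x3 x4. let u = x2 + x4 in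
          A 1 (x1,x2,x3,x4) = 0 \<and>
          A 2 (x1,x2,x3,x4) = \<Phi> u \<and> A 4 (x1,x2,x3,x4) = \<Phi> u \<and>
          A 3 (x1,x2,x3,x4) = \<Psi> u))"
    show "admits A (xi lam) \<and> admits A e1 \<and> admits A e3 \<and> admits A (vadd e2 (vscale (-1) e4))"
    proof (cases "lam = 0")
      case True
      then obtain \<Phi> \<Psi> where sp: "smooth1 \<Phi>" and sq: "smooth1 \<Psi>" and E: "\<forall>x1 x2 x3 x4.
          A (Suc 0) (x1,x2,x3,x4) = 0 \<and>
          A 2 (x1,x2,x3,x4) = \<Phi> (x2+x4) \<and> A 4 (x1,x2,x3,x4) = \<Phi> (x2+x4) \<and>
          A 3 (x1,x2,x3,x4) = \<Psi> (x2+x4)"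
        using R by (auto simp: Let_def)
      have dp: "\<forall>s. (\<Phi> has_real_derivative deriv \<Phi> s) (at s)"
        using sp by (auto elim: smooth1.cases simp: DERIV_deriv_iff_real_differentiable)
      have dq: "\<forall>s. (\<Psi> has_real_derivative deriv \<Psi> s) (at s)"
        using sq by (auto elim: smooth1.cases simp: DERIV_deriv_iff_real_differentiable)
      show ?thesis
        by (rule backward[of A "\<lambda>_. 0" \<Phi> \<Psi> \<Phi> "\<lambda>_. 0" "deriv \<Phi>" "deriv \<Psi>" "deriv \<Phi>"])
           (use E dp dq True in auto)
    next
      case False
      then obtain C1 C2 C3 C4 where E: "\<forall>x1 x2 x3 x4.
          A (Suc 0) (x1,x2,x3,x4) = C2 / lam * (x2+x4) + C3 \<and>
          A 2 (x1,x2,x3,x4) = C2 / (2 * lam\<^sup>2) * (x2+x4)\<^sup>2 + C3 / lam * (x2+x4) + C4 \<and>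
          A 3 (x1,x2,x3,x4) = C1 \<and>
          A 4 (x1,x2,x3,x4) = A 2 (x1,x2,x3,x4) + C2"
        using R by (auto simp: Let_def)
      let ?F2 = "\<lambda>u. C2 / (2 * lam\<^sup>2) * u\<^sup>2 + C3 / lam * u + C4"
      let ?G2 = "\<lambda>u. C2/(2*lam\<^sup>2)*(2* u) + C3/lam"
      have d2: "\<forall>s. (?F2 has_real_derivative ?G2 s) (at s)"
        using False by (auto intro!: derivative_eq_intros simp: field_simps power2_eq_square)
      have d4: "\<forall>s. ((\<lambda>u. ?F2 u + C2) has_real_derivative ?G2 s) (at s)"
        using DERIV_add[OF d2[rule_format] DERIV_const[of C2]] by simp
      have d1: "\<forall>s. ((\<lambda>u. C2 / lam * u + C3) has_real_derivative C2 / lam) (at s)"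
        using False by (auto intro!: derivative_eq_intros)
      show ?thesis
        by (rule backward[of A "\<lambda>u. C2 / lam * u + C3" ?F2 "\<lambda>_. C1" "\<lambda>u. ?F2 u + C2"
              "\<lambda>_. C2 / lam" ?G2 "\<lambda>_. 0" ?G2])
           (use E d1 d2 d4 False in \<open>auto simp: field_simps power2_eq_square\<close>)
    qed
  qed
qed
end
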